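(* Let $\kappa<-1$. Let $P_k,P_0\in\bar D$ and $b_k,b_0$ with $\kappa|P_k|<b_k<|P_k|$, $\kappa|P_0|<b_0<|P_0|$, such that $P_k\to P_0$ and $b_k\to b_0$ as $k\to\infty$. If $z_k\in\Gamma(P_k,b_k)$ and $z_k\to z_0$, then $z_0\in\Gamma(P_0,b_0)$, and the normals satisfy $\nu_k(z_k)\to\nu(z_0)$, where $\nu_k(z)=\frac{z}{|z|}-\kappa\frac{P_k-z}{|P_k-z|}$ is the normal to $\Gamma(P_k,b_k)$ at $z$ and $\nu(z)=\frac{z}{|z|}-\kappa\frac{P_0-z}{|P_0-z|}$ the normal to $\Gamma(P_0,b_0)$ at $z$.
   Context: $D\subset\mathbb R^n$ is contained in an $(n-1)$-dimensional hypersurface, with $\bar D$ compact and $0\notin\bar D$. For $P\ne0$ and $\kappa|P|<b<|P|$: $h(x,P,b)=\frac{(\kappa^2x\cdot P-b)-\sqrt{(\kappa^2x\cdot P-b)^2-(\kappa^2-1)(\kappa^2|P|^2-b^2)}}{\kappa^2-1}$, $I(P,b)=\frac{b+\sqrt{(\kappa^2-1)(\kappa^2|P|^2-b^2)}}{\kappa^2|P|}$, and the refracting oval is $\Gamma(P,b)=\{h(x,P,b)x:x\in S^{n-1},\ x\cdot P\ge I(P,b)|P|\}$; its points $z$ satisfy $|z|+\kappa|z-P|=b$. *)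

theory Defs
  imports "HOL-Analysis.Analysis"
begin

definition h_fun :: "real \<Rightarrow> 'a::euclidean_space \<Rightarrow> 'a \<Rightarrow> real \<Rightarrow> real" where
  "h_fun \<kappa> x P b =
     ((\<kappa>\<^sup>2 * (x \<bullet> P) - b)
       - sqrt ((\<kappa>\<^sup>2 * (x \<bullet> P) - b)\<^sup>2 - (\<kappa>\<^sup>2 - 1) * (\<kappa>\<^sup>2 * (norm P)\<^sup>2 - b\<^sup>2)))
     / (\<kappa>\<^sup>2 - 1)"

definition I_fun :: "real \<Rightarrow> 'a::euclidean_space \<Rightarrow> real \<Rightarrow> real" where
  "I_fun \<kappa> P b = (b + sqrt ((\<kappa>\<^sup>2 - 1) * (\<kappa>\<^sup>2 * (norm P)\<^sup>2 - b\<^sup>2))) / (\<kappa>\<^sup>2 * norm P)"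

definition oval :: "real \<Rightarrow> 'a::euclidean_space \<Rightarrow> real \<Rightarrow> 'a set" where
  "oval \<kappa> P b = {h_fun \<kappa> x P b *\<^sub>R x | x. x \<in> sphere 0 1 \<and> x \<bullet> P \<ge> I_fun \<kappa> P b * norm P}"

definition oval_normal :: "real \<Rightarrow> 'a::euclidean_space \<Rightarrow> 'a \<Rightarrow> 'a" where
  "oval_normal \<kappa> P z = (1 / norm z) *\<^sub>R z - \<kappa> *\<^sub>R ((1 / norm (P - z)) *\<^sub>R (P - z))"

end

theory Submission
  imports Defs
begin

lemma alg_h:
  fixes \<kappa> b s p h :: real
  assumes k: "\<kappa> < -1" and b1: "\<kappa> * p < b" and b2: "b < p" and p: "p > 0"
    and s: "\<kappa>\<^sup>2 * s - b \<ge> sqrt ((\<kappa>\<^sup>2 - 1) * (\<kappa>\<^sup>2 * p\<^sup>2 - b\<^sup>2))"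
    and h: "h = ((\<kappa>\<^sup>2 * s - b) - sqrt ((\<kappa>\<^sup>2 * s - b)\<^sup>2 - (\<kappa>\<^sup>2 - 1) * (\<kappa>\<^sup>2 * p\<^sup>2 - b\<^sup>2))) / (\<kappa>\<^sup>2 - 1)"
  shows "h > 0 \<and> (s = p \<longrightarrow> h \<noteq> p)"
proof -
  define B where "B = \<kappa>\<^sup>2 * s - b"
  define C where "C = \<kappa>\<^sup>2 * p\<^sup>2 - b\<^sup>2"
  define e where "e = \<kappa>\<^sup>2 - 1"
  have e: "e > 0"
  proof -
    have "1 * 1 < (-\<kappa>) * (-\<kappa>)" using k by (intro mult_strict_mono) auto
    thus ?thesis unfolding e_def by (simp add: power2_eq_square)
  qed
  have bb: "b\<^sup>2 < \<kappa>\<^sup>2 * p\<^sup>2"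
  proof -
    have "1 * p < (-\<kappa>) * p" using k p by (intro mult_strict_right_mono) auto
    hence "\<bar>b\<bar> < - \<kappa> * p" using b1 b2 by (simp add: abs_less_iff)
    hence "\<bar>b\<bar>\<^sup>2 < (- \<kappa> * p)\<^sup>2" by (intro power_strict_mono) auto
    thus ?thesis by (simp add: power_mult_distrib)
  qed
  have C: "C > 0" unfolding C_def using bb by simp
  have Q: "e * C > 0" using e C by simp
  have sQ: "sqrt (e*C) > 0" using Q by simp
  have B: "B \<ge> sqrt (e*C)" using s unfolding B_def e_def C_def by simp
  have Bp: "B > 0" using B sQ by linarith
  have D0: "B\<^sup>2 - e*C \<ge> 0"
  proof -
    have "(sqrt (e*C))\<^sup>2 \<le> B\<^sup>2" using B sQ by (intro power_mono) auto
    thus ?thesis using Q by simp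
  qed
  have DB: "sqrt (B\<^sup>2 - e*C) < B"
  proof -
    have "sqrt (B\<^sup>2 - e*C) < sqrt (B\<^sup>2)" using Q by (intro real_sqrt_less_mono) simp
    thus ?thesis using Bp by simp
  qed
  have h': "h = (B - sqrt (B\<^sup>2 - e*C)) / e" using h unfolding B_def C_def e_def by simp
  have hpos: "h > 0" unfolding h' using DB e by simp
  have quad: "e * h\<^sup>2 - 2 * B * h + C = 0"
  proof -
    have "sqrt (B\<^sup>2 - e*C) = B - e*h" using h' e by (simp add: field_simps)
    hence "(sqrt (B\<^sup>2 - e*C))\<^sup>2 = (B - e*h)\<^sup>2" by simp
    hence "B\<^sup>2 - e*C = (B - e*h)\<^sup>2" using D0 by simp
    hence "e * (e * h\<^sup>2 - 2 * B * h + C) = 0" by (simp add: algebra_simps power2_eq_square)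
    thus ?thesis using e by simp
  qed
  have "s = p \<longrightarrow> h \<noteq> p"
  proof
    assume sp: "s = p"
    show "h \<noteq> p"
    proof
      assume hp: "h = p"
      have "e * p\<^sup>2 - 2 * (\<kappa>\<^sup>2 * p - b) * p + (\<kappa>\<^sup>2 * p\<^sup>2 - b\<^sup>2) = 0"
        using quad unfolding hp B_def C_def sp .
      hence "-(p - b)\<^sup>2 = 0" unfolding e_def by (simp add: algebra_simps power2_eq_square)
      thus False using b2 by simp
    qed
  qed
  thus ?thesis using hpos by simp
qed

theorem lemma3p7:
  fixes D :: "'a::euclidean_space set"
    and \<kappa> :: real
    and P :: "nat \<Rightarrow> 'a" and b :: "nat \<Rightarrow> real" and z :: "nat \<Rightarrow> 'a"
    and P0 z0 :: 'a and b0 :: real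
  assumes "compact (closure D)" and "0 \<notin> closure D"
    and "\<kappa> < -1"
    and "\<And>k. P k \<in> closure D" and "P0 \<in> closure D"
    and "\<And>k. \<kappa> * norm (P k) < b k \<and> b k < norm (P k)"
    and "\<kappa> * norm P0 < b0" and "b0 < norm P0"
    and "P \<longlonglongrightarrow> P0" and "b \<longlonglongrightarrow> b0"
    and "\<And>k. z k \<in> oval \<kappa> (P k) (b k)"
    and "z \<longlonglongrightarrow> z0"
  shows "z0 \<in> oval \<kappa> P0 b0
         \<and> (\<lambda>k. oval_normal \<kappa> (P k) (z k)) \<longlonglongrightarrow> oval_normal \<kappa> P0 z0"
proof -
  note A = assms
  have P0nz: "P0 \<noteq> 0" using A(2,5) by auto
  have "\<forall>k. \<exists>x. x \<in> sphere 0 1 \<and> x \<bullet> P k \<ge> I_fun \<kappa> (P k) (b k) * norm (P k)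
               \<and> z k = h_fun \<kappa> x (P k) (b k) *\<^sub>R x" (is "\<forall>k. \<exists>x. ?Q k x")
    using A(11) unfolding oval_def by blast
  hence xex: "\<forall>k. \<exists>x. ?Q k x" .
  then obtain x where x: "\<And>k. x k \<in> sphere 0 1" "\<And>k. x k \<bullet> P k \<ge> I_fun \<kappa> (P k) (b k) * norm (P k)"
     "\<And>k. z k = h_fun \<kappa> (x k) (P k) (b k) *\<^sub>R x k"
    using xex unfolding choice_iff by blast
  obtain x0 r where r: "strict_mono r" and x0s: "x0 \<in> sphere 0 1" and xr: "(x \<circ> r) \<longlonglongrightarrow> x0"
  proof -
    have "seq_compact (sphere (0::'a) 1)" by (rule compact_imp_seq_compact[OF compact_sphere])
    moreover have "\<forall>n. x n \<in> sphere 0 1" using x(1) by blast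
    ultimately obtain l r' where "l \<in> sphere 0 1" "strict_mono r'" "(x \<circ> r') \<longlonglongrightarrow> l"
      by (rule seq_compactE)
    thus ?thesis using that by blast
  qed
  have Pr: "(P \<circ> r) \<longlonglongrightarrow> P0" using A(9) r by (rule LIMSEQ_subseq_LIMSEQ)
  have br: "(b \<circ> r) \<longlonglongrightarrow> b0" using A(10) r by (rule LIMSEQ_subseq_LIMSEQ)
  have zr: "(z \<circ> r) \<longlonglongrightarrow> z0" using A(12) r by (rule LIMSEQ_subseq_LIMSEQ)
  have Pr': "(\<lambda>k. P (r k)) \<longlonglongrightarrow> P0" using Pr by (simp add: comp_def)
  have br': "(\<lambda>k. b (r k)) \<longlonglongrightarrow> b0" using br by (simp add: comp_def)
  have xr': "(\<lambda>k. x (r k)) \<longlonglongrightarrow> x0" using xr by (simp add: comp_def)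
  have k21: "\<kappa>\<^sup>2 - 1 \<noteq> 0"
  proof -
    have "1 * 1 < (-\<kappa>) * (-\<kappa>)" using A(3) by (intro mult_strict_mono) auto
    hence "\<kappa>\<^sup>2 > 1" by (simp add: power2_eq_square)
    thus ?thesis by simp
  qed
  have hlim: "(\<lambda>k. h_fun \<kappa> (x (r k)) (P (r k)) (b (r k))) \<longlonglongrightarrow> h_fun \<kappa> x0 P0 b0"
    unfolding h_fun_def by (intro tendsto_intros Pr' br' xr' k21)
  have Ilim: "(\<lambda>k. I_fun \<kappa> (P (r k)) (b (r k)) * norm (P (r k))) \<longlonglongrightarrow> I_fun \<kappa> P0 b0 * norm P0"
  proof -
    have "\<kappa>\<^sup>2 * norm P0 \<noteq> 0" using P0nz A(3) by simp
    thus ?thesis unfolding I_fun_def by (intro tendsto_intros Pr' br')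
  qed
  have ilim: "(\<lambda>k. x (r k) \<bullet> P (r k)) \<longlonglongrightarrow> x0 \<bullet> P0"
    by (intro tendsto_intros Pr' xr')
  have x0I: "x0 \<bullet> P0 \<ge> I_fun \<kappa> P0 b0 * norm P0"
    using Ilim ilim x(2) by (intro LIMSEQ_le) auto
  have "(\<lambda>k. z (r k)) \<longlonglongrightarrow> h_fun \<kappa> x0 P0 b0 *\<^sub>R x0"
    unfolding x(3) by (intro tendsto_intros hlim xr')
  moreover have "(\<lambda>k. z (r k)) \<longlonglongrightarrow> z0" using zr by (simp add: comp_def)
  ultimately have z0eq: "z0 = h_fun \<kappa> x0 P0 b0 *\<^sub>R x0" using LIMSEQ_unique by blast
  have z0in: "z0 \<in> oval \<kappa> P0 b0" unfolding oval_def using z0eq x0s x0I by blast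
  have np: "norm P0 > 0" using P0nz by simp
  have k2: "\<kappa>\<^sup>2 > 0" using A(3) by simp
  have sge: "\<kappa>\<^sup>2 * (x0 \<bullet> P0) - b0 \<ge> sqrt ((\<kappa>\<^sup>2 - 1) * (\<kappa>\<^sup>2 * (norm P0)\<^sup>2 - b0\<^sup>2))"
  proof -
    have "I_fun \<kappa> P0 b0 * norm P0 = (b0 + sqrt ((\<kappa>\<^sup>2 - 1) * (\<kappa>\<^sup>2 * (norm P0)\<^sup>2 - b0\<^sup>2))) / \<kappa>\<^sup>2"
      unfolding I_fun_def using np k2 by (simp add: field_simps)
    hence "(b0 + sqrt ((\<kappa>\<^sup>2 - 1) * (\<kappa>\<^sup>2 * (norm P0)\<^sup>2 - b0\<^sup>2))) / \<kappa>\<^sup>2 \<le> x0 \<bullet> P0" using x0I by simp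
    thus ?thesis using k2 by (simp add: field_simps)
  qed
  have key: "h_fun \<kappa> x0 P0 b0 > 0 \<and> (x0 \<bullet> P0 = norm P0 \<longrightarrow> h_fun \<kappa> x0 P0 b0 \<noteq> norm P0)"
    by (rule alg_h[OF A(3) A(7) A(8) np sge]) (simp add: h_fun_def)
  have nx0: "norm x0 = 1" using x0s by simp
  have z0nz: "z0 \<noteq> 0" using key nx0 z0eq by auto
  have z0P: "P0 - z0 \<noteq> 0"
  proof
    assume "P0 - z0 = 0"
    define hh where "hh = h_fun \<kappa> x0 P0 b0"
    have hh: "hh > 0" using key hh_def by simp
    have PZ: "P0 = hh *\<^sub>R x0" using z0eq \<open>P0 - z0 = 0\<close> hh_def by simp
    have "norm P0 = norm (hh *\<^sub>R x0)" using PZ by (rule arg_cong)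
    also have "\<dots> = hh" using hh nx0 by simp
    finally have nP: "norm P0 = hh" .
    have "x0 \<bullet> P0 = x0 \<bullet> (hh *\<^sub>R x0)" using PZ by (rule arg_cong)
    also have "\<dots> = hh * (x0 \<bullet> x0)" by simp
    also have "x0 \<bullet> x0 = 1" using nx0 by (simp add: norm_eq_1)
    finally have "x0 \<bullet> P0 = norm P0" using nP by simp
    hence "hh \<noteq> norm P0" using key hh_def by simp
    thus False using nP by simp
  qed
  have "(\<lambda>k. oval_normal \<kappa> (P k) (z k)) \<longlonglongrightarrow> oval_normal \<kappa> P0 z0"
    unfolding oval_normal_def using z0nz z0P
    by (intro tendsto_intros A(9) A(12)) auto
  thus ?thesis using z0in by simp
qed

end
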